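(* Fix a time $t$. Let $\hat{\mathcal Z}_t$, $\hat{\mathcal Z}_{t+1}$ be Banach spaces, let $\mathfrak F_{\mathcal Y}$ and $\mathfrak F_{\hat{\mathcal Z}_{t+1}}$ be classes of uniformly bounded measurable real functions on $\mathcal Y$ and on $\hat{\mathcal Z}_{t+1}$ respectively, and let $\delta_t>0$. Let $\hat\sigma_t:\mathcal H_t\to\hat{\mathcal Z}_t$ and $\hat\sigma_{t+1}:\mathcal H_{t+1}\to\hat{\mathcal Z}_{t+1}$ be measurable history compression functions. Suppose: (AP2a) there is a measurable update function $\hat\varphi_t:\hat{\mathcal Z}_t\times\mathcal Y\times\mathcal A\to\hat{\mathcal Z}_{t+1}$ such that for every realization $h_{t+1}=(h_t,y_t,a_t)$ of $H_{t+1}$, $\hat\sigma_{t+1}(h_{t+1})=\hat\varphi_t(\hat\sigma_t(h_t),y_t,a_t)$; (AP2b) there is a measurable kernel $\hat P^y_t:\hat{\mathcal Z}_t\times\mathcal A\to\Delta(\mathcal Y)$ such that for every realization $h_t$ of $H_t$ and every $a_t\in\mathcal A$, setting $\mu^y_t(B)=\mathbb P(Y_t\in B\mid H_t=h_t,A_t=a_t)$ and $\nu^y_t(B)=\hat P^y_t(B\mid\hat\sigma_t(h_t),a_t)$ for Borel $B\subseteq\mathcal Y$, we have $d_{\mathfrak F_{\mathcal Y}}(\mu^y_t,\nu^y_t)\le \delta_t/\kappa_t$, where $\kappa_t=\sup_{h_t\in\mathcal H_t,\,a_t\in\mathcal A}\kappa_{\mathfrak F_{\mathcal Y},\mathfrak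 F_{\hat{\mathcal Z}_{t+1}}}\big(\hat\varphi_t(\hat\sigma_t(h_t),\cdot,a_t)\big)$. Define the kernel $\hat P_t:\hat{\mathcal Z}_t\times\mathcal A\to\Delta(\hat{\mathcal Z}_{t+1})$ by $\hat P_t(B\mid\hat\sigma_t(h_t),a_t)=\int_{\mathcal Y}\mathbf 1_B\big(\hat\varphi_t(\hat\sigma_t(h_t),y,a_t)\big)\,\hat P^y_t(dy\mid\hat\sigma_t(h_t),a_t)$ for Borel $B\subseteq\hat{\mathcal Z}_{t+1}$. Then (AP2) holds: for every realization $h_t$ of $H_t$ and every $a_t\in\mathcal A$, with $\mu_t(B)=\mathbb P(\hat\sigma_{t+1}(H_{t+1})\in B\mid H_t=h_t,A_t=a_t)$ and $\nu_t(B)=\hat P_t(B\mid\hat\sigma_t(h_t),a_t)$, we have $d_{\mathfrak F_{\hat{\mathcal Z}_{t+1}}}(\mu_t,\nu_t)\le\delta_t$.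
   Context: Setting: a stochastic input-output system over a finite horizon $t=1,\dots,T$. At each time $t$ an agent chooses an action $A_t$ in an action space $\mathcal A$; the system then produces an observation $Y_t$ in a measurable space $\mathcal Y$ and a real reward $R_t$. The history is $H_1=\emptyset$ and $H_{t+1}=(H_t,Y_t,A_t)$, i.e. $H_t=(Y_{1:t-1},A_{1:t-1})$, taking values in $\mathcal H_t$; the conditional law of $(Y_t,R_t)$ given $(H_t,A_t)$ is fixed by the system. Integral probability metric: for a class $\mathfrak F$ of uniformly bounded measurable real functions on a measurable space $\mathcal X$ and probability measures $\mu,\nu$ on $\mathcal X$, $d_{\mathfrak F}(\mu,\nu)=\sup_{f\in\mathfrak F}\left|\int f\,d\mu-\int f\,d\nu\right|$. Minkowski functional: $\rho_{\mathfrak F}(f)=\inf\{\rho>0:\rho^{-1}f\in\mathfrak F\}$. Contraction factor: for $\ell:\mathcal X\to\mathcal X'$ and function classes $\mathfrak F_{\mathcal X}$ on $\mathcal X$, $\mathfrak F_{\mathcal X'}$ on $\mathcal X'$, $\kappa_{\mathfrak F_{\mathcal X},\mathfrak F_{\mathcal X'}}(\ell)=\sup_{f\in\mathfrak F_{\mathcal X'}}\rho_{\mathfrak F_{\mathcal X}}(f\circ\ell)$. *)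

theory Defs
  imports "HOL-Probability.Probability"
begin

text \<open>Integral probability metric d_F(mu,nu) = sup over f in F of |int f dmu - int f dnu|,
  valued in the extended reals (sup of the empty class is -infinity).\<close>
definition ipm :: "('x \<Rightarrow> real) set \<Rightarrow> 'x measure \<Rightarrow> 'x measure \<Rightarrow> ereal" where
  "ipm F \<mu> \<nu> = (SUP f\<in>F. ereal \<bar>(\<integral>x. f x \<partial>\<mu>) - (\<integral>x. f x \<partial>\<nu>)\<bar>)"

text \<open>Minkowski functional rho_F(f) = inf {rho > 0. rho^-1 f in F} (inf of the empty set is +infinity).\<close>
definition minkowski :: "('x \<Rightarrow> real) set \<Rightarrow> ('x \<Rightarrow> real) \<Rightarrow> ereal" where
  "minkowski F f = (INF \<rho>\<in>{\<rho>::real. \<rho> > 0 \<and> (\<lambda>x. inverse \<rho> * f x) \<in> F}. ereal \<rho>)"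

definition contraction :: "('x \<Rightarrow> real) set \<Rightarrow> ('x' \<Rightarrow> real) set \<Rightarrow> ('x \<Rightarrow> 'x') \<Rightarrow> ereal" where
  "contraction FX FX' l = (SUP f\<in>FX'. minkowski FX (f \<circ> l))"

definition unif_bdd_meas_class :: "'x measure \<Rightarrow> ('x \<Rightarrow> real) set \<Rightarrow> bool" where
  "unif_bdd_meas_class M F \<longleftrightarrow> F \<subseteq> borel_measurable M \<and> (\<exists>C. \<forall>f\<in>F. \<forall>x\<in>space M. \<bar>f x\<bar> \<le> C)"

definition hatP :: "('z \<times> 'y \<times> 'a \<Rightarrow> 'w::topological_space) \<Rightarrow> ('z \<times> 'a \<Rightarrow> 'y measure) \<Rightarrow> 'z \<Rightarrow> 'a \<Rightarrow> 'w measure" where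
  "hatP \<phi> Py z a = measure_of (space borel) (sets borel)
     (\<lambda>B. \<integral>\<^sup>+ y. indicator B (\<phi> (z, y, a)) \<partial>(Py (z, a)))"

end

theory Submission imports Defs begin

lemma abs_int_le_C:
  fixes g :: "'x \<Rightarrow> real"
  assumes "prob_space N" "\<And>x. x \<in> space N \<Longrightarrow> \<bar>g x\<bar> \<le> C"
  shows "\<bar>\<integral>x. g x \<partial>N\<bar> \<le> C"
proof -
  interpret prob_space N by fact
  obtain x where "x \<in> space N" using not_empty by blast
  then have C0: "0 \<le> C" using assms(2)[of x] by linarith
  show ?thesis
  proof (cases "integrable N g")
    case True
    have "\<bar>\<integral>x. g x \<partial>N\<bar> \<le> (\<integral>x. \<bar>g x\<bar> \<partial>N)" by simp
    also have "\<dots> \<le> C"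
      using True assms(2) by (intro integral_le_const) (auto intro!: AE_I2)
    finally show ?thesis .
  next
    case False
    then show ?thesis using C0 by (simp add: not_integrable_integral_eq)
  qed
qed

lemma hatP_eq:
  fixes \<phi> :: "'z \<times> 'y \<times> 'a \<Rightarrow> 'w::topological_space"
  assumes "(\<lambda>y. \<phi> (z, y, a)) \<in> Py (z, a) \<rightarrow>\<^sub>M borel"
  shows "hatP \<phi> Py z a = distr (Py (z, a)) borel (\<lambda>y. \<phi> (z, y, a))"
  unfolding hatP_def distr_def
proof (rule measure_of_eq)
  show "sets borel \<subseteq> Pow (space borel)" by (rule sets.space_closed)
  fix B assume "B \<in> sigma_sets (space (borel::'w measure)) (sets borel)"
  then have B: "B \<in> sets borel" using sets.sigma_sets_eq[of "borel::'w measure"] by simp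
  have "(\<integral>\<^sup>+ y. indicator B (\<phi> (z, y, a)) \<partial>Py (z, a))
      = (\<integral>\<^sup>+ y. indicator ((\<lambda>y. \<phi> (z, y, a)) -` B \<inter> space (Py (z, a))) y \<partial>Py (z, a))"
    by (intro nn_integral_cong) (auto split: split_indicator)
  also have "\<dots> = emeasure (Py (z, a)) ((\<lambda>y. \<phi> (z, y, a)) -` B \<inter> space (Py (z, a)))"
    using measurable_sets[OF assms B] by simp
  finally show "(\<integral>\<^sup>+ y. indicator B (\<phi> (z, y, a)) \<partial>Py (z, a))
      = emeasure (Py (z, a)) ((\<lambda>y. \<phi> (z, y, a)) -` B \<inter> space (Py (z, a)))" .
qed

theorem mainTheorem1:
  fixes MH :: "'h measure" and MY :: "'y measure" and MA :: "'a measure"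
    and K :: "'h \<times> 'a \<Rightarrow> 'y measure"
    and FY :: "('y \<Rightarrow> real) set" and FZ :: "('w::banach \<Rightarrow> real) set"
    and \<delta> :: real
    and \<sigma>t :: "'h \<Rightarrow> 'z::banach" and \<sigma>t1 :: "'h \<times> 'y \<times> 'a \<Rightarrow> 'w"
    and \<phi> :: "'z \<times> 'y \<times> 'a \<Rightarrow> 'w" and Py :: "'z \<times> 'a \<Rightarrow> 'y measure"
  assumes K_kernel: "K \<in> MH \<Otimes>\<^sub>M MA \<rightarrow>\<^sub>M prob_algebra MY"
    and FY: "unif_bdd_meas_class MY FY"
    and FZ: "unif_bdd_meas_class (borel :: 'w measure) FZ"
    and \<delta>_pos: "\<delta> > 0"
    and \<sigma>t_meas: "\<sigma>t \<in> borel_measurable MH"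
    and \<sigma>t1_meas: "\<sigma>t1 \<in> borel_measurable (MH \<Otimes>\<^sub>M (MY \<Otimes>\<^sub>M MA))"
    and \<phi>_meas: "\<phi> \<in> borel_measurable ((borel :: 'z measure) \<Otimes>\<^sub>M (MY \<Otimes>\<^sub>M MA))"
    and AP2a: "\<forall>h\<in>space MH. \<forall>y\<in>space MY. \<forall>a\<in>space MA. \<sigma>t1 (h, y, a) = \<phi> (\<sigma>t h, y, a)"
    and Py_kernel: "Py \<in> (borel :: 'z measure) \<Otimes>\<^sub>M MA \<rightarrow>\<^sub>M prob_algebra MY"
    and \<kappa>_finite: "(SUP p\<in>space MH \<times> space MA.
                       contraction FY FZ (\<lambda>y. \<phi> (\<sigma>t (fst p), y, snd p))) < \<infinity>"
    and AP2b: "\<forall>h\<in>space MH. \<forall>a\<in>space MA.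
                 ipm FY (K (h, a)) (Py (\<sigma>t h, a))
                   \<le> ereal \<delta> / (SUP p\<in>space MH \<times> space MA.
                       contraction FY FZ (\<lambda>y. \<phi> (\<sigma>t (fst p), y, snd p)))"
  shows "\<forall>h\<in>space MH. \<forall>a\<in>space MA.
           ipm FZ (distr (K (h, a)) borel (\<lambda>y. \<sigma>t1 (h, y, a))) (hatP \<phi> Py (\<sigma>t h) a)
             \<le> ereal \<delta>"
proof (intro ballI)
  fix h a assume h: "h \<in> space MH" and a: "a \<in> space MA"
  have ha: "(h, a) \<in> space (MH \<Otimes>\<^sub>M MA)" using h a by (simp add: space_pair_measure)
  have Kin: "K (h, a) \<in> space (prob_algebra MY)" using measurable_space[OF K_kernel ha] .
  then have Ksets: "sets (K (h, a)) = sets MY" and Kprob: "prob_space (K (h, a))"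
    by (auto simp: space_prob_algebra)
  have Kspace: "space (K (h, a)) = space MY" using Ksets by (rule sets_eq_imp_space_eq)
  have za: "(\<sigma>t h, a) \<in> space ((borel :: 'z measure) \<Otimes>\<^sub>M MA)" using a by (simp add: space_pair_measure)
  have Pin: "Py (\<sigma>t h, a) \<in> space (prob_algebra MY)" using measurable_space[OF Py_kernel za] .
  then have Psets: "sets (Py (\<sigma>t h, a)) = sets MY" and Pprob: "prob_space (Py (\<sigma>t h, a))"
    by (auto simp: space_prob_algebra)
  have Pspace: "space (Py (\<sigma>t h, a)) = space MY" using Psets by (rule sets_eq_imp_space_eq)
  define l where "l = (\<lambda>y. \<phi> (\<sigma>t h, y, a))"
  have l_meas: "l \<in> MY \<rightarrow>\<^sub>M borel"
    unfolding l_def using a by (intro measurable_compose[OF _ \<phi>_meas]) auto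
  have s_meas: "(\<lambda>y. \<sigma>t1 (h, y, a)) \<in> MY \<rightarrow>\<^sub>M borel"
    using a h by (intro measurable_compose[OF _ \<sigma>t1_meas]) auto
  define \<kappa> where "\<kappa> = (SUP p\<in>space MH \<times> space MA.
                       contraction FY FZ (\<lambda>y. \<phi> (\<sigma>t (fst p), y, snd p)))"
  have contr_le: "contraction FY FZ l \<le> \<kappa>"
    unfolding \<kappa>_def l_def using h a by (intro SUP_upper2[of "(h, a)"]) auto
  obtain C where C: "\<And>g x. g \<in> FY \<Longrightarrow> x \<in> space MY \<Longrightarrow> \<bar>g x\<bar> \<le> C"
    using FY unfolding unif_bdd_meas_class_def by blast
  show "ipm FZ (distr (K (h, a)) borel (\<lambda>y. \<sigma>t1 (h, y, a))) (hatP \<phi> Py (\<sigma>t h) a) \<le> ereal \<delta>"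
    unfolding ipm_def
  proof (rule SUP_least)
    fix f assume f: "f \<in> FZ"
    have f_meas: "f \<in> borel_measurable borel" using FZ f unfolding unif_bdd_meas_class_def by blast
    have e1: "(\<integral>x. f x \<partial>distr (K (h, a)) borel (\<lambda>y. \<sigma>t1 (h, y, a))) = (\<integral>y. f (l y) \<partial>K (h, a))"
    proof -
      have "(\<integral>x. f x \<partial>distr (K (h, a)) borel (\<lambda>y. \<sigma>t1 (h, y, a))) = (\<integral>y. f (\<sigma>t1 (h, y, a)) \<partial>K (h, a))"
        using s_meas f_meas by (intro integral_distr) (auto simp: measurable_cong_sets[OF Ksets refl])
      also have "\<dots> = (\<integral>y. f (l y) \<partial>K (h, a))"
        using AP2a h a by (intro Bochner_Integration.integral_cong[OF refl]) (simp add: Kspace l_def)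
      finally show ?thesis .
    qed
    have "hatP \<phi> Py (\<sigma>t h) a = distr (Py (\<sigma>t h, a)) borel l"
      unfolding l_def using l_meas by (intro hatP_eq) (simp add: l_def measurable_cong_sets[OF Psets refl])
    then have e2: "(\<integral>x. f x \<partial>hatP \<phi> Py (\<sigma>t h) a) = (\<integral>y. f (l y) \<partial>Py (\<sigma>t h, a))"
      using l_meas f_meas by (simp add: integral_distr measurable_cong_sets[OF Psets refl])
    define D where "D = \<bar>(\<integral>y. f (l y) \<partial>K (h, a)) - (\<integral>y. f (l y) \<partial>Py (\<sigma>t h, a))\<bar>"
    have mk_le: "minkowski FY (f \<circ> l) \<le> \<kappa>"
    proof -
      have "minkowski FY (f \<circ> l) \<le> contraction FY FZ l" unfolding contraction_def using f by (rule SUP_upper)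
      then show ?thesis using contr_le by (rule order_trans)
    qed
    have mk_ge: "0 \<le> minkowski FY (f \<circ> l)"
      unfolding minkowski_def by (rule INF_greatest) auto
    have "\<kappa> \<noteq> \<infinity>" using \<kappa>_finite unfolding \<kappa>_def by simp
    moreover have "0 \<le> \<kappa>" using mk_le mk_ge by simp
    ultimately obtain k where k: "\<kappa> = ereal k" and k0: "0 \<le> k"
      by (cases \<kappa>) simp_all
    have scale: "\<exists>\<rho>>0. \<rho> < k + \<epsilon> \<and> (\<lambda>x. inverse \<rho> * f (l x)) \<in> FY
          \<and> D = \<rho> * \<bar>(\<integral>x. inverse \<rho> * f (l x) \<partial>K (h, a)) - (\<integral>x. inverse \<rho> * f (l x) \<partial>Py (\<sigma>t h, a))\<bar>"
      if eps: "\<epsilon> > 0" for \<epsilon>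
    proof -
      have "ereal k < ereal (k + \<epsilon>)" using eps by simp
      then have "minkowski FY (f \<circ> l) < ereal (k + \<epsilon>)" using mk_le k by (metis order_le_less_trans)
      then obtain \<rho> where \<rho>0: "\<rho> \<in> {\<rho>. \<rho> > 0 \<and> (\<lambda>x. inverse \<rho> * (f \<circ> l) x) \<in> FY}" "ereal \<rho> < ereal (k + \<epsilon>)"
        unfolding minkowski_def INF_less_iff by blast
      then have \<rho>: "\<rho> > 0" "(\<lambda>x. inverse \<rho> * f (l x)) \<in> FY" "\<rho> < k + \<epsilon>"
        by (simp_all add: o_def)
      have "D = \<rho> * \<bar>(\<integral>x. inverse \<rho> * f (l x) \<partial>K (h, a)) - (\<integral>x. inverse \<rho> * f (l x) \<partial>Py (\<sigma>t h, a))\<bar>"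
        using \<rho>(1) unfolding D_def
        by (simp add: right_diff_distrib[symmetric] abs_mult)
      then show ?thesis using \<rho> by auto
    qed
    have "D \<le> \<delta>"
    proof (rule field_le_epsilon)
      fix e :: real assume e: "0 < e"
      show "D \<le> \<delta> + e"
      proof (cases "k = 0")
        case False
        then have kp: "k > 0" using k0 by simp
        define \<epsilon> where "\<epsilon> = e * k / \<delta>"
        have \<epsilon>p: "\<epsilon> > 0" using e kp \<delta>_pos by (simp add: \<epsilon>_def)
        obtain \<rho> where \<rho>: "\<rho> > 0" "\<rho> < k + \<epsilon>" "(\<lambda>x. inverse \<rho> * f (l x)) \<in> FY"
          and DD: "D = \<rho> * \<bar>(\<integral>x. inverse \<rho> * f (l x) \<partial>K (h, a)) - (\<integral>x. inverse \<rho> * f (l x) \<partial>Py (\<sigma>t h, a))\<bar>"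
          using scale[OF \<epsilon>p] by blast
        define Dg where "Dg = \<bar>(\<integral>x. inverse \<rho> * f (l x) \<partial>K (h, a)) - (\<integral>x. inverse \<rho> * f (l x) \<partial>Py (\<sigma>t h, a))\<bar>"
        have "ereal Dg \<le> ipm FY (K (h, a)) (Py (\<sigma>t h, a))"
          unfolding ipm_def Dg_def using \<rho>(3) by (rule SUP_upper2) simp
        also have "\<dots> \<le> ereal \<delta> / \<kappa>" using AP2b h a unfolding \<kappa>_def by blast
        also have "\<dots> = ereal (\<delta> / k)" using k kp by simp
        finally have Dg: "Dg \<le> \<delta> / k" by simp
        have Dg0: "0 \<le> Dg" unfolding Dg_def by simp
        have "D = \<rho> * Dg" using DD Dg_def by simp
        also have "\<dots> \<le> (k + \<epsilon>) * (\<delta> / k)"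
          using \<epsilon>p k0 by (intro mult_mono[OF less_imp_le[OF \<rho>(2)] Dg _ Dg0]) linarith
        also have "\<dots> = \<delta> + e" using kp \<delta>_pos by (simp add: \<epsilon>_def field_simps)
        finally show ?thesis .
      next
        case True
        obtain x0 where x0: "x0 \<in> space MY"
          using prob_space.not_empty[OF Kprob] Kspace by blast
        define \<epsilon> where "\<epsilon> = e / (2 * \<bar>C\<bar> + 1)"
        have \<epsilon>p: "\<epsilon> > 0" using e by (simp add: \<epsilon>_def)
        obtain \<rho> where \<rho>: "\<rho> > 0" "\<rho> < k + \<epsilon>" "(\<lambda>x. inverse \<rho> * f (l x)) \<in> FY"
          and DD: "D = \<rho> * \<bar>(\<integral>x. inverse \<rho> * f (l x) \<partial>K (h, a)) - (\<integral>x. inverse \<rho> * f (l x) \<partial>Py (\<sigma>t h, a))\<bar>"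
          using scale[OF \<epsilon>p] by blast
        define Dg where "Dg = \<bar>(\<integral>x. inverse \<rho> * f (l x) \<partial>K (h, a)) - (\<integral>x. inverse \<rho> * f (l x) \<partial>Py (\<sigma>t h, a))\<bar>"
        have b1: "\<bar>\<integral>x. inverse \<rho> * f (l x) \<partial>K (h, a)\<bar> \<le> C"
          by (rule abs_int_le_C[OF Kprob]) (use C[OF \<rho>(3)] Kspace in simp)
        have b2: "\<bar>\<integral>x. inverse \<rho> * f (l x) \<partial>Py (\<sigma>t h, a)\<bar> \<le> C"
          by (rule abs_int_le_C[OF Pprob]) (use C[OF \<rho>(3)] Pspace in simp)
        have Dg: "Dg \<le> 2 * \<bar>C\<bar> + 1" unfolding Dg_def using b1 b2 by linarith
        have Dg0: "0 \<le> Dg" unfolding Dg_def by simp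
        have "D = \<rho> * Dg" using DD Dg_def by simp
        also have "\<dots> \<le> \<epsilon> * (2 * \<bar>C\<bar> + 1)"
          using \<epsilon>p True \<rho>(2) by (intro mult_mono[OF _ Dg _ Dg0]) linarith+
        also have "\<dots> = e" by (simp add: \<epsilon>_def)
        finally show ?thesis using \<delta>_pos by simp
      qed
    qed
    then show "ereal \<bar>(\<integral>x. f x \<partial>distr (K (h, a)) borel (\<lambda>y. \<sigma>t1 (h, y, a))) - (\<integral>x. f x \<partial>hatP \<phi> Py (\<sigma>t h) a)\<bar> \<le> ereal \<delta>"
      unfolding e1 e2 D_def by simp
  qed
qed

end
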